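(* Let $\mathbf{Z_1},\mathbf{Z_2},\mathbf{Z_3}\in\mathrm{GF}(2)^{6\times 30}$ be constructed from an arbitrary $\mathbf{z}\in\mathrm{GF}(2)^{2\times30}$ as follows: rows 1–2 of $\mathbf{Z_1}$ equal $\mathbf{z}$, rows 3–4 of $\mathbf{Z_1}$ equal $f$ applied to rows 1–2, rows 5–6 of $\mathbf{Z_1}$ equal $f$ applied to rows 3–4, $\mathbf{Z_2}=g(\mathbf{Z_1})$, $\mathbf{Z_3}=g(\mathbf{Z_2})$. Partition the 27 demand vectors $(d_1,d_2,d_3)\in\{A,B,C\}^3$ into five parts: Part 1: $AAA, BBB, CCC$; Part 2: $ABC, BCA, CAB$; Part 3: $ACB, CBA, BAC$; Part 4: $ABB, BAB, BBA, BCC, CBC, CCB, CAA, ACA, AAC$; Part 5: $ACC, CAC, CCA, CBB, BCB, BBC, BAA, ABA, AAB$. Then for any two demand vectors $D,D'$ in the same part, there is a column permutation $\pi$ in the group generated by $f$ and $g$ such that for every binary matrix $\mathbf{X}$ with 30 columns, if $\mathbf{X}$ is a valid delivery matrix for demand $D$ then $\pi(\mathbf{X})$ is a valid delivery matrix for demand $D'$ (and has the same number of rows).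
   Context: Three files $A=W_1$, $B=W_2$, $C=W_3$ are each split into 10 subfiles $A_1,\dots,A_{10}$, $B_1,\dots,B_{10}$, $C_1,\dots,C_{10}$, i.i.d. uniform; the information vector is $\mathbf{W}=[A_1,\dots,A_{10},B_1,\dots,B_{10},C_1,\dots,C_{10}]$, and a binary matrix $\mathbf{G}$ with 30 columns represents the linear code $\mathbf{G}\mathbf{W}^T$. Let $\mathbf{W_A}=[I_{10}\ 0\ 0]$, $\mathbf{W_B}=[0\ I_{10}\ 0]$, $\mathbf{W_C}=[0\ 0\ I_{10}]$ be the generator matrices of the files. User $i\in\{1,2,3\}$ caches $\mathbf{Z_i}\mathbf{W}^T$. For a demand vector $D=(d_1,d_2,d_3)\in\{A,B,C\}^3$ (user $i$ requests file $d_i$), a binary matrix $\mathbf{X}$ with 30 columns is a valid delivery matrix for $D$ if for each $i=1,2,3$, user $i$ can recover file $d_i$ from its cache and $\mathbf{X}\mathbf{W}^T$, i.e., $\operatorname{rank}\begin{bmatrix}\mathbf{Z_i}\\ \mathbf{X}\end{bmatrix}=\operatorname{rank}\begin{bmatrix}\mathbf{Z_i}\\ \mathbf{W_{d_i}}\\ \mathbf{X}\end{bmatrix}$ over $\mathrm{GF}(2)$. Column operations (applied to each row of a matrix with 30 columns): $f$ moves the coefficient of $A_i$ to the position of $B_i$, of $B_i$ to $C_i$, and of $C_i$ to $A_i$ ($i=1,\dots,10$), i.e., relabels files $A\mapsto B\mapsto C\mapsto A$; $g$ moves, within each file, the coefficient of subfile $i$ to subfile $i+3$ reduced into $\{1,\dots,9\}$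 modulo 9 (so $7\mapsto1$, $8\mapsto2$, $9\mapsto3$) for $1\le i\le 9$, and fixes subfile $10$. *)

theory Defs
  imports "HOL-Analysis.Analysis" "HOL-Library.Z2" "HOL-Library.Numeral_Type"
begin

text \<open>GF(2) is the field \<open>bit\<close> of HOL-Library.Z2. Columns are numbered 0..29 (as naturals; column \<open>c\<close> is the
  element \<open>of_nat c :: 30\<close>): column \<open>10*k + (i-1)\<close> holds the coefficient of subfile
  \<open>i\<close> (1..10) of file \<open>k\<close> (0 = A, 1 = B, 2 = C), matching
  W = [A_1..A_10, B_1..B_10, C_1..C_10].\<close>

type_synonym row = "bit ^ 30"
type_synonym gmat = "row list"

datatype cfile = FA | FB | FC

definition file_idx :: "cfile \<Rightarrow> nat" where
  "file_idx d = (case d of FA \<Rightarrow> 0 | FB \<Rightarrow> 1 | FC \<Rightarrow> 2)"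

definition grank :: "gmat \<Rightarrow> nat" where
  "grank M = vec.dim (set M)"

definition W_file :: "cfile \<Rightarrow> gmat" where
  "W_file d = map (\<lambda>s. axis (of_nat (10 * file_idx d + s) :: 30) (1::bit)) [0..<10]"

definition col_nat :: "30 \<Rightarrow> nat" where
  "col_nat j = nat (Rep_bit0 j)"

definition col_perm :: "(nat \<Rightarrow> nat) \<Rightarrow> 30 \<Rightarrow> 30" where
  "col_perm \<sigma> j = of_nat (\<sigma> (col_nat j))"

text \<open>Column operation: the coefficient in column c is moved to column \<sigma> c.\<close>
definition permute_row :: "(30 \<Rightarrow> 30) \<Rightarrow> row \<Rightarrow> row" where
  "permute_row p r = (\<chi> j. r $ (inv p j))"

definition permute_mat :: "(30 \<Rightarrow> 30) \<Rightarrow> gmat \<Rightarrow> gmat" where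
  "permute_mat p M = map (permute_row p) M"

text \<open>f: A_i \<mapsto> B_i \<mapsto> C_i \<mapsto> A_i (column c moves to c+10 mod 30).\<close>
definition f_pos :: "nat \<Rightarrow> nat" where
  "f_pos c = (c + 10) mod 30"

text \<open>g: within each cfile, subfile i (1..9) moves to ((i+3-1) mod 9)+1, subfile 10 fixed.
  In 0-based subfile index s = i-1: s \<mapsto> (s+3) mod 9 for s < 9, and 9 fixed.\<close>
definition g_pos :: "nat \<Rightarrow> nat" where
  "g_pos c = 10 * (c div 10) + (if c mod 10 = 9 then 9 else (c mod 10 + 3) mod 9)"

definition f_perm :: "30 \<Rightarrow> 30" where "f_perm = col_perm f_pos"
definition g_perm :: "30 \<Rightarrow> 30" where "g_perm = col_perm g_pos"

abbreviation f_op :: "row \<Rightarrow> row" where "f_op \<equiv> permute_row f_perm"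
abbreviation g_op :: "row \<Rightarrow> row" where "g_op \<equiv> permute_row g_perm"

inductive_set gen_fg :: "(30 \<Rightarrow> 30) set" where
  gen_id: "id \<in> gen_fg"
| gen_f: "p \<in> gen_fg \<Longrightarrow> f_perm \<circ> p \<in> gen_fg"
| gen_g: "p \<in> gen_fg \<Longrightarrow> g_perm \<circ> p \<in> gen_fg"
| gen_f_inv: "p \<in> gen_fg \<Longrightarrow> inv f_perm \<circ> p \<in> gen_fg"
| gen_g_inv: "p \<in> gen_fg \<Longrightarrow> inv g_perm \<circ> p \<in> gen_fg"

definition Z1 :: "row \<Rightarrow> row \<Rightarrow> gmat" where
  "Z1 z1 z2 = [z1, z2, f_op z1, f_op z2, f_op (f_op z1), f_op (f_op z2)]"
definition Z2 :: "row \<Rightarrow> row \<Rightarrow> gmat" where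
  "Z2 z1 z2 = map g_op (Z1 z1 z2)"
definition Z3 :: "row \<Rightarrow> row \<Rightarrow> gmat" where
  "Z3 z1 z2 = map g_op (Z2 z1 z2)"

text \<open>User recovers cfile d from cache Z and delivery X.\<close>
definition decodable :: "gmat \<Rightarrow> cfile \<Rightarrow> gmat \<Rightarrow> bool" where
  "decodable Z d X \<longleftrightarrow> grank (Z @ X) = grank (Z @ W_file d @ X)"

definition valid_delivery :: "row \<Rightarrow> row \<Rightarrow> cfile \<times> cfile \<times> cfile \<Rightarrow> gmat \<Rightarrow> bool" where
  "valid_delivery z1 z2 D X \<longleftrightarrow>
     (case D of (d1, d2, d3) \<Rightarrow>
        decodable (Z1 z1 z2) d1 X \<and> decodable (Z2 z1 z2) d2 X \<and> decodable (Z3 z1 z2) d3 X)"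

definition demand_parts :: "(cfile \<times> cfile \<times> cfile) set set" where
  "demand_parts = {
     {(FA,FA,FA), (FB,FB,FB), (FC,FC,FC)},
     {(FA,FB,FC), (FB,FC,FA), (FC,FA,FB)},
     {(FA,FC,FB), (FC,FB,FA), (FB,FA,FC)},
     {(FA,FB,FB), (FB,FA,FB), (FB,FB,FA), (FB,FC,FC), (FC,FB,FC), (FC,FC,FB),
      (FC,FA,FA), (FA,FC,FA), (FA,FA,FC)},
     {(FA,FC,FC), (FC,FA,FC), (FC,FC,FA), (FC,FB,FB), (FB,FC,FB), (FB,FB,FC),
      (FB,FA,FA), (FA,FB,FA), (FA,FA,FB)} }"

end

theory Submission imports Defs begin
lemma rep30_of_nat: "Rep_bit0 (of_nat c :: 30) = int c mod 30"
  by (simp add: bit0.of_nat_eq Abs_bit0_inverse)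
lemma col_nat_of_nat: "c < 30 \<Longrightarrow> col_nat (of_nat c :: 30) = c"
  by (simp add: col_nat_def rep30_of_nat)
lemma col_nat_lt: "col_nat (j::30) < 30"
proof -
  have "0 \<le> Rep_bit0 j \<and> Rep_bit0 j < 30" using Rep_bit0[of j] by simp
  then show ?thesis unfolding col_nat_def by linarith
qed
lemma of_nat_col_nat: "of_nat (col_nat j) = (j::30)"
proof -
  have r: "0 \<le> Rep_bit0 j \<and> Rep_bit0 j < 30" using Rep_bit0[of j] by simp
  have "Rep_bit0 (of_nat (col_nat j) :: 30) = Rep_bit0 j"
    unfolding rep30_of_nat col_nat_def using r by simp
  then show ?thesis using Rep_bit0_inject by blast
qed
lemma all30: "(\<forall>j::30. P j) \<longleftrightarrow> (\<forall>c<30. P (of_nat c))"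
  by (metis col_nat_lt of_nat_col_nat)
lemma col_perm_of_nat: "c<30 \<Longrightarrow> col_perm \<sigma> (of_nat c) = of_nat (\<sigma> c)"
  by (simp add: col_perm_def col_nat_of_nat)
lemma of_nat_inj30: "a<30 \<Longrightarrow> b<30 \<Longrightarrow> (of_nat a :: 30) = of_nat b \<longleftrightarrow> a = b"
  by (metis col_nat_of_nat)

definition fi :: "nat \<Rightarrow> nat" where "fi c = (c + 20) mod 30"
definition gi :: "nat \<Rightarrow> nat" where
  "gi c = 10 * (c div 10) + (if c mod 10 = 9 then 9 else (c mod 10 + 6) mod 9)"

lemma enum30: "c < (30::nat) \<Longrightarrow> c \<in> {0,1,2,3,4,5,6,7,8,9,10,11,12,13,14,15,16,17,18,19,20,21,22,23,24,25,26,27,28,29}"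
  by (simp only: insert_iff empty_iff) presburger

lemma fnat: "\<forall>c<30. f_pos c < 30 \<and> fi c < 30 \<and> f_pos (fi c) = c \<and> fi (f_pos c) = c"
proof (intro allI impI)
  fix c :: nat assume "c < 30"
  then show "f_pos c < 30 \<and> fi c < 30 \<and> f_pos (fi c) = c \<and> fi (f_pos c) = c"
    using enum30[OF \<open>c < 30\<close>] unfolding f_pos_def fi_def by (elim insertE emptyE) simp_all
qed
lemma gnat: "\<forall>c<30. g_pos c < 30 \<and> gi c < 30 \<and> g_pos (gi c) = c \<and> gi (g_pos c) = c"
proof (intro allI impI)
  fix c :: nat assume "c < 30"
  then have "c \<in> {0,1,2,3,4,5,6,7,8,9,10,11,12,13,14,15,16,17,18,19,20,21,22,23,24,25,26,27,28,29}" by (rule enum30)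
  then show "g_pos c < 30 \<and> gi c < 30 \<and> g_pos (gi c) = c \<and> gi (g_pos c) = c"
    by (elim insertE emptyE) (simp_all add: g_pos_def gi_def)
qed
lemma fgnat: "\<forall>c<30. fi (gi c) = gi (fi c) \<and> fi (fi (fi c)) = c \<and> gi (gi (gi c)) = c"
proof (intro allI impI)
  fix c :: nat assume "c < 30"
  then have "c \<in> {0,1,2,3,4,5,6,7,8,9,10,11,12,13,14,15,16,17,18,19,20,21,22,23,24,25,26,27,28,29}" by (rule enum30)
  then show "fi (gi c) = gi (fi c) \<and> fi (fi (fi c)) = c \<and> gi (gi (gi c)) = c"
    by (elim insertE emptyE) (simp_all add: fi_def gi_def)
qed

lemma col_perm_comp_id:
  assumes "\<forall>c<30. \<tau> c < 30 \<and> \<sigma> (\<tau> c) = c"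
  shows "col_perm \<sigma> \<circ> col_perm \<tau> = id"
proof
  fix j :: 30
  obtain c where c: "c < 30" "j = of_nat c" using col_nat_lt of_nat_col_nat by metis
  show "(col_perm \<sigma> \<circ> col_perm \<tau>) j = id j"
    using assms c by (simp add: col_perm_of_nat)
qed

lemma inv_col_perm:
  assumes "\<forall>c<30. \<sigma> c < 30 \<and> \<tau> c < 30 \<and> \<sigma> (\<tau> c) = c \<and> \<tau> (\<sigma> c) = c"
  shows "bij (col_perm \<sigma>)" "inv (col_perm \<sigma>) = col_perm \<tau>"
proof -
  have 1: "col_perm \<sigma> \<circ> col_perm \<tau> = id" using assms by (intro col_perm_comp_id) auto
  have 2: "col_perm \<tau> \<circ> col_perm \<sigma> = id" using assms by (intro col_perm_comp_id) auto
  show "bij (col_perm \<sigma>)" using 1 2 o_bij by blast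
  show "inv (col_perm \<sigma>) = col_perm \<tau>" using 1 2 inv_unique_comp by blast
qed

lemma bij_f: "bij f_perm" and inv_f: "inv f_perm = col_perm fi"
  unfolding f_perm_def using inv_col_perm fnat by blast+
lemma bij_g: "bij g_perm" and inv_g: "inv g_perm = col_perm gi"
  unfolding g_perm_def using inv_col_perm gnat by blast+

lemma f_op_nth: "c < 30 \<Longrightarrow> f_op r $ of_nat c = r $ of_nat (fi c)"
  by (simp add: permute_row_def inv_f col_perm_of_nat)
lemma g_op_nth: "c < 30 \<Longrightarrow> g_op r $ of_nat c = r $ of_nat (gi c)"
  by (simp add: permute_row_def inv_g col_perm_of_nat)

lemma row_eqI: "(\<And>c. c < 30 \<Longrightarrow> (a::row) $ of_nat c = b $ of_nat c) \<Longrightarrow> a = b"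
  by (simp add: vec_eq_iff all30)

lemma f3: "f_op (f_op (f_op r)) = r"
  by (rule row_eqI) (use fnat fgnat in \<open>simp add: f_op_nth\<close>)
lemma g3: "g_op (g_op (g_op r)) = r"
  by (rule row_eqI) (use gnat fgnat in \<open>simp add: g_op_nth\<close>)
lemma fg: "f_op (g_op r) = g_op (f_op r)"
  by (rule row_eqI) (use fnat gnat fgnat in \<open>simp add: g_op_nth f_op_nth\<close>)

lemma inv_eq_iff': "bij p \<Longrightarrow> (inv p j = a) = (j = p a)"
  by (metis bij_inv_eq_iff)

lemma permute_row_axis: "bij p \<Longrightarrow> permute_row p (axis a x) = axis (p a) x"
  unfolding permute_row_def axis_def
  by (rule vec_eq_iff[THEN iffD2]) (simp add: inv_eq_iff')

lemma permute_row_comp: "bij p \<Longrightarrow> bij q \<Longrightarrow> permute_row (p \<circ> q) r = permute_row p (permute_row q r)"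
  unfolding permute_row_def by (simp add: o_inv_distrib)

lemma linear_perm: "Vector_Spaces.linear (*s) (*s) (permute_row p)"
  by (unfold_locales) (simp_all add: permute_row_def vec_eq_iff algebra_simps)

lemma inj_perm: "bij p \<Longrightarrow> inj (permute_row p)"
proof (rule injI)
  fix x y :: row assume b: "bij p" and e: "permute_row p x = permute_row p y"
  show "x = y"
  proof (rule vec_eq_iff[THEN iffD2], rule allI)
    fix i
    have "permute_row p x $ p i = permute_row p y $ p i" using e by simp
    then show "x $ i = y $ i" using b by (simp add: permute_row_def bij_is_inj inv_f_f)
  qed
qed

lemma dim_perm: "bij p \<Longrightarrow> vec.dim (permute_row p ` S) = vec.dim S"
  by (rule vec.dim_image_eq[OF linear_perm]) (meson inj_perm inj_on_subset subset_UNIV)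

lemma grank_perm: "bij p \<Longrightarrow> grank (map (permute_row p) M) = grank M"
  by (simp add: grank_def dim_perm)


fun fn :: "cfile \<Rightarrow> cfile" where "fn FA = FB" | "fn FB = FC" | "fn FC = FA"

lemma W_f: "map f_op (W_file d) = W_file (fn d)"
proof -
  have "f_perm (of_nat (10 * file_idx d + s)) = of_nat (10 * file_idx (fn d) + s)" if s: "s < 10" for s
  proof -
    have lt: "10 * file_idx d + s < 30" using s by (cases d) (simp_all add: file_idx_def)
    have "f_perm (of_nat (10 * file_idx d + s)) = of_nat (f_pos (10 * file_idx d + s))"
      unfolding f_perm_def by (rule col_perm_of_nat[OF lt])
    also have "f_pos (10 * file_idx d + s) = 10 * file_idx (fn d) + s"
      using s by (cases d) (simp_all add: f_pos_def file_idx_def)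
    finally show ?thesis .
  qed
  then show ?thesis
    unfolding W_file_def by (simp add: permute_row_axis[OF bij_f])
qed

definition gs :: "nat \<Rightarrow> nat" where "gs s = (if s = 9 then 9 else (s + 3) mod 9)"

lemma gs_img: "gs ` {0..<10} = {0..<10}"
proof
  show "gs ` {0..<10} \<subseteq> {0..<10}" by (auto simp: gs_def)
  show "{0..<10} \<subseteq> gs ` {0..<10}"
  proof
    fix s :: nat assume "s \<in> {0..<10}"
    then have s: "s < 10" by simp
    define t where "t = (if s = 9 then 9 else (s + 6) mod 9)"
    have m: "(s + 6) mod 9 < (10::nat)" by (rule less_trans[OF mod_less_divisor]) simp_all
    have t: "t \<in> {0..<10}" unfolding t_def using m by (simp only: atLeastLessThan_iff) simp
    have "gs t = s"
    proof (cases "s = 9")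
      case True then show ?thesis by (simp add: t_def gs_def)
    next
      case False
      then have "s < 9" using s by simp
      then have "(s + 6) mod 9 \<noteq> 9" "((s + 6) mod 9 + 3) mod 9 = s" by presburger+
      then show ?thesis using False by (simp add: t_def gs_def)
    qed
    then show "s \<in> gs ` {0..<10}" using t by force
  qed
qed

lemma W_g: "set (map g_op (W_file d)) = set (W_file d)"
proof -
  have "g_perm (of_nat (10 * file_idx d + s)) = of_nat (10 * file_idx d + gs s)" if s: "s < 10" for s
  proof -
    have lt: "10 * file_idx d + s < 30" using s by (cases d) (simp_all add: file_idx_def)
    have "g_perm (of_nat (10 * file_idx d + s)) = of_nat (g_pos (10 * file_idx d + s))"
      unfolding g_perm_def by (rule col_perm_of_nat[OF lt])
    also have "g_pos (10 * file_idx d + s) = 10 * file_idx d + gs s"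
    proof -
      have "(10 * file_idx d + s) div 10 = file_idx d" "(10 * file_idx d + s) mod 10 = s"
        using s by presburger+
      then show ?thesis unfolding g_pos_def gs_def by simp
    qed
    finally show ?thesis .
  qed
  then have "set (map g_op (W_file d)) = (\<lambda>s. axis (of_nat (10 * file_idx d + s) :: 30) (1::bit)) ` (gs ` {0..<10})"
    unfolding W_file_def by (auto simp: permute_row_axis[OF bij_g] image_image)
  also have "\<dots> = set (W_file d)" by (simp add: gs_img W_file_def)
  finally show ?thesis .
qed

lemma Z1_f: "set (map f_op (Z1 z1 z2)) = set (Z1 z1 z2)"
  by (auto simp: Z1_def f3)
lemma Z2_f: "set (map f_op (Z2 z1 z2)) = set (Z2 z1 z2)"
proof -
  have "set (map f_op (Z2 z1 z2)) = g_op ` set (map f_op (Z1 z1 z2))"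
    by (simp add: Z2_def fg image_image)
  then show ?thesis by (simp only: Z1_f) (simp add: Z2_def)
qed
lemma Z3_f: "set (map f_op (Z3 z1 z2)) = set (Z3 z1 z2)"
proof -
  have "set (map f_op (Z3 z1 z2)) = g_op ` set (map f_op (Z2 z1 z2))"
    by (simp add: Z3_def fg image_image)
  then show ?thesis by (simp only: Z2_f) (simp add: Z3_def)
qed
lemma Z3_g: "map g_op (Z3 z1 z2) = Z1 z1 z2"
  by (simp add: Z3_def Z2_def Z1_def g3)

lemma set_grank: "set A = set B \<Longrightarrow> grank A = grank B"
  by (simp add: grank_def)

lemma decod_transfer:
  assumes p: "bij p" and z: "set (map (permute_row p) Z) = set Z'"
    and w: "set (map (permute_row p) (W_file d)) = set (W_file d')"
    and dec: "decodable Z d X"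
  shows "decodable Z' d' (permute_mat p X)"
proof -
  have "grank (Z' @ permute_mat p X) = grank (map (permute_row p) (Z @ X))"
    by (rule set_grank) (use z in \<open>simp add: permute_mat_def\<close>)
  also have "\<dots> = grank (Z @ X)" by (rule grank_perm[OF p])
  finally have 1: "grank (Z' @ permute_mat p X) = grank (Z @ X)" .
  have "grank (Z' @ W_file d' @ permute_mat p X) = grank (map (permute_row p) (Z @ W_file d @ X))"
    by (rule set_grank) (use z w in \<open>simp add: permute_mat_def\<close>)
  also have "\<dots> = grank (Z @ W_file d @ X)" by (rule grank_perm[OF p])
  finally have 2: "grank (Z' @ W_file d' @ permute_mat p X) = grank (Z @ W_file d @ X)" .
  show ?thesis using dec 1 2 by (simp add: decodable_def)
qed

fun fs :: "cfile \<times> cfile \<times> cfile \<Rightarrow> cfile \<times> cfile \<times> cfile" where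
  "fs (a, b, c) = (fn a, fn b, fn c)"
fun gsh :: "cfile \<times> cfile \<times> cfile \<Rightarrow> cfile \<times> cfile \<times> cfile" where
  "gsh (a, b, c) = (c, a, b)"

lemma valid_f: "valid_delivery z1 z2 D X \<Longrightarrow> valid_delivery z1 z2 (fs D) (permute_mat f_perm X)"
proof (cases D)
  case (fields a b c)
  assume "valid_delivery z1 z2 D X"
  then have d: "decodable (Z1 z1 z2) a X" "decodable (Z2 z1 z2) b X" "decodable (Z3 z1 z2) c X"
    using fields by (auto simp: valid_delivery_def)
  have "decodable (Z1 z1 z2) (fn a) (permute_mat f_perm X)"
    by (rule decod_transfer[OF bij_f Z1_f _ d(1)]) (simp add: W_f)
  moreover have "decodable (Z2 z1 z2) (fn b) (permute_mat f_perm X)"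
    by (rule decod_transfer[OF bij_f Z2_f _ d(2)]) (simp add: W_f)
  moreover have "decodable (Z3 z1 z2) (fn c) (permute_mat f_perm X)"
    by (rule decod_transfer[OF bij_f Z3_f _ d(3)]) (simp add: W_f)
  ultimately show ?thesis using fields by (simp add: valid_delivery_def)
qed

lemma valid_g: "valid_delivery z1 z2 D X \<Longrightarrow> valid_delivery z1 z2 (gsh D) (permute_mat g_perm X)"
proof (cases D)
  case (fields a b c)
  assume "valid_delivery z1 z2 D X"
  then have d: "decodable (Z1 z1 z2) a X" "decodable (Z2 z1 z2) b X" "decodable (Z3 z1 z2) c X"
    using fields by (auto simp: valid_delivery_def)
  have "decodable (Z1 z1 z2) c (permute_mat g_perm X)"
    by (rule decod_transfer[OF bij_g _ W_g d(3)]) (simp add: Z3_g)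
  moreover have "decodable (Z2 z1 z2) a (permute_mat g_perm X)"
    by (rule decod_transfer[OF bij_g _ W_g d(1)]) (simp add: Z2_def)
  moreover have "decodable (Z3 z1 z2) b (permute_mat g_perm X)"
    by (rule decod_transfer[OF bij_g _ W_g d(2)]) (simp add: Z3_def)
  ultimately show ?thesis using fields by (simp add: valid_delivery_def)
qed

definition good :: "row \<Rightarrow> row \<Rightarrow> _ \<Rightarrow> _ \<Rightarrow> bool" where
  "good z1 z2 D D' \<longleftrightarrow> (\<exists>p \<in> gen_fg. \<forall>X :: gmat.
           valid_delivery z1 z2 D X \<longrightarrow>
             valid_delivery z1 z2 D' (permute_mat p X) \<and> length (permute_mat p X) = length X)"

lemma gen_bij: "p \<in> gen_fg \<Longrightarrow> bij p"
proof (induction rule: gen_fg.induct)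
  case gen_id show ?case by (rule bij_id)
next
  case (gen_f p) show ?case by (rule bij_comp[OF gen_f.IH bij_f])
next
  case (gen_g p) show ?case by (rule bij_comp[OF gen_g.IH bij_g])
next
  case (gen_f_inv p) show ?case by (rule bij_comp[OF gen_f_inv.IH bij_imp_bij_inv[OF bij_f]])
next
  case (gen_g_inv p) show ?case by (rule bij_comp[OF gen_g_inv.IH bij_imp_bij_inv[OF bij_g]])
qed

lemma pm_comp: "bij p \<Longrightarrow> bij q \<Longrightarrow> permute_mat (p \<circ> q) X = permute_mat p (permute_mat q X)"
  by (simp add: permute_mat_def permute_row_comp)

lemma good_refl: "good z1 z2 D D"
  unfolding good_def
proof (rule bexI[OF _ gen_id])
  have pr: "permute_row id r = r" for r unfolding permute_row_def by (simp add: inv_id)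
  have pm: "permute_mat id X = X" for X unfolding permute_mat_def by (rule map_idI) (rule pr)
  show "\<forall>X. valid_delivery z1 z2 D X \<longrightarrow> valid_delivery z1 z2 D (permute_mat id X) \<and> length (permute_mat id X) = length X"
    unfolding pm by simp
qed

lemma good_f: "good z1 z2 D D' \<Longrightarrow> good z1 z2 D (fs D')"
  unfolding good_def
  by (metis gen_f pm_comp bij_f gen_bij valid_f length_map permute_mat_def)

lemma good_g: "good z1 z2 D D' \<Longrightarrow> good z1 z2 D (gsh D')"
  unfolding good_def
  by (metis gen_g pm_comp bij_g gen_bij valid_g length_map permute_mat_def)

lemma good_pow: "good z1 z2 D ((fs ^^ m) ((gsh ^^ n) D))"
proof (induction m)
  case 0
  show ?case by (induction n) (auto intro: good_refl good_g)
next
  case (Suc m) then show ?case by (simp add: good_f)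
qed


lemma fs_gsh: "fs (gsh D) = gsh (fs D)" by (cases D) simp
lemma fs3: "(fs ^^ 3) D = D" 
proof (cases D)
  case (fields a b c) then show ?thesis by (cases a; cases b; cases c) (simp_all add: eval_nat_numeral)
qed
lemma gsh3: "(gsh ^^ 3) D = D" by (cases D) (simp add: eval_nat_numeral)

lemma fs_gsh_pow: "(fs ^^ m) ((gsh ^^ n) D) = (gsh ^^ n) ((fs ^^ m) D)"
proof -
  have 1: "fs ((gsh ^^ n) D) = (gsh ^^ n) (fs D)" for D by (induction n) (simp_all add: fs_gsh)
  show ?thesis by (induction m) (simp_all add: 1)
qed

lemma fs3k: "(fs ^^ (3 * k)) D = D"
  by (induction k) (simp_all add: funpow_add fs3 del: funpow.simps)
lemma gsh3k: "(gsh ^^ (3 * k)) D = D"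
  by (induction k) (simp_all add: funpow_add gsh3 del: funpow.simps)

lemma comb: "(fs ^^ m) ((gsh ^^ n) ((fs ^^ a) ((gsh ^^ b) x))) = (fs ^^ (m + a)) ((gsh ^^ (n + b)) x)"
proof -
  have "(gsh ^^ n) ((fs ^^ a) y) = (fs ^^ a) ((gsh ^^ n) y)" for y by (rule fs_gsh_pow[symmetric])
  then show ?thesis by (simp add: funpow_add)
qed

lemma orbit_rel:
  assumes "D = (fs ^^ a) ((gsh ^^ b) D0)" "D' = (fs ^^ a') ((gsh ^^ b') D0)"
  shows "D' = (fs ^^ (a' + 2 * a)) ((gsh ^^ (b' + 2 * b)) D)"
proof -
  have "(fs ^^ (a' + 2 * a)) ((gsh ^^ (b' + 2 * b)) D) = (fs ^^ (a' + 2 * a + a)) ((gsh ^^ (b' + 2 * b + b)) D0)"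
    unfolding assms(1) by (rule comb)
  also have "\<dots> = (fs ^^ (a' + 3 * a)) ((gsh ^^ (b' + 3 * b)) D0)"
    by (simp add: algebra_simps)
  also have "\<dots> = (fs ^^ a') ((gsh ^^ b') ((fs ^^ (3 * a)) ((gsh ^^ (3 * b)) D0)))"
    by (rule comb[symmetric])
  also have "\<dots> = D'" by (simp add: fs3k gsh3k assms(2))
  finally show ?thesis by simp
qed

lemma orbit:
  assumes "P \<in> demand_parts"
  shows "\<exists>D0. \<forall>D\<in>P. \<exists>a\<in>{0,1,2::nat}. \<exists>b\<in>{0,1,2::nat}. D = (fs ^^ a) ((gsh ^^ b) D0)"
  using assms unfolding demand_parts_def
  apply (elim insertE emptyE)
  apply (rule exI[of _ "(FA,FA,FA)"], simp add: eval_nat_numeral)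
  apply (rule exI[of _ "(FA,FB,FC)"], simp add: eval_nat_numeral)
  apply (rule exI[of _ "(FA,FC,FB)"], simp add: eval_nat_numeral)
  apply (rule exI[of _ "(FA,FB,FB)"], simp add: eval_nat_numeral)
  apply (rule exI[of _ "(FA,FC,FC)"], simp add: eval_nat_numeral)
  done

theorem lemma1:
  fixes z1 z2 :: row
  assumes "P \<in> demand_parts" and "D \<in> P" and "D' \<in> P"
  shows "\<exists>p \<in> gen_fg. \<forall>X :: gmat.
           valid_delivery z1 z2 D X \<longrightarrow>
             valid_delivery z1 z2 D' (permute_mat p X) \<and> length (permute_mat p X) = length X"
proof -
  obtain D0 where o: "\<forall>D\<in>P. \<exists>a\<in>{0,1,2::nat}. \<exists>b\<in>{0,1,2::nat}. D = (fs ^^ a) ((gsh ^^ b) D0)"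
    using orbit[OF assms(1)] by blast
  obtain a b where 1: "D = (fs ^^ a) ((gsh ^^ b) D0)" using o assms(2) by blast
  obtain a' b' where 2: "D' = (fs ^^ a') ((gsh ^^ b') D0)" using o assms(3) by blast
  have "good z1 z2 D D'" using orbit_rel[OF 1 2] good_pow by metis
  then show ?thesis by (simp add: good_def)
qed
end
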